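(* Let $f\in\mathbb{C}[h]$, $\lambda\in S_f$ and $\dot z\in\mathbb{C}$. (1) The formulas defining $A_{\mathcal{H}(f)}(\lambda,\dot z)$ and $B_{\mathcal{H}(f)}(\lambda,\dot z)$ give $\mathcal{H}(f)$-module structures on $\mathbb{C}[t,t^{-1}]$. (2) $A_{\mathcal{H}(f)}(\lambda,\dot z)$ (resp. $B_{\mathcal{H}(f)}(\lambda,\dot z)$) is a simple $\mathcal{H}(f)$-module if and only if $\lambda(i)+\dot z\neq 0$ for all $i\in\mathbb{Z}$ and $|\lambda|=0$. (3) Suppose $\lambda(i)+\dot z\neq 0$ for all $i\in\mathbb{Z}$ and $m=|\lambda|\neq 0$. Then every nonzero submodule of $A_{\mathcal{H}(f)}(\lambda,\dot z)$ (resp. $B_{\mathcal{H}(f)}(\lambda,\dot z)$) equals $\mathbb{C}[t,t^{-1}]g(t)$ for some nonzero $g(t)\in\mathbb{C}[t^m]$ which is an eigenvector of $h$. In particular, every maximal proper nonzero submodule of $A_{\mathcal{H}(f)}(\lambda,\dot z)$ equals $\mathbb{C}[t,t^{-1}](t^m-a)$ for some $a\in\mathbb{C}^*$.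
   Context: For $f(h)\in\mathbb{C}[h]$, $\mathcal{H}(f)$ is the unital associative $\mathbb{C}$-algebra generated by $x,y,h$ with relations $hx=xf(h)$, $yh=f(h)y$, $yx-xy=f(h)-h$. $S_f$ is the set of maps $\lambda:\mathbb{Z}\to\mathbb{C}$ with $f(\lambda(i))=\lambda(i+1)$ for all $i$; $|\lambda|$ is the nonnegative generator of the subgroup $\{m\in\mathbb{Z}\mid\lambda(i+m)=\lambda(i)\ \forall i\}$. For $\lambda\in S_f$, $\dot z\in\mathbb{C}$: $A_{\mathcal{H}(f)}(\lambda,\dot z)$ is the space $\mathbb{C}[t,t^{-1}]$ with $ht^i=\lambda(i)t^i$, $xt^i=t^{i+1}$, $yt^i=(\lambda(i)+\dot z)t^{i-1}$; $B_{\mathcal{H}(f)}(\lambda,\dot z)$ is the space $\mathbb{C}[t,t^{-1}]$ with $ht^i=\lambda(i)t^i$, $xt^i=(\lambda(i+1)+\dot z)t^{i+1}$, $yt^i=t^{i-1}$ ($i\in\mathbb{Z}$). *)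

theory Defs
  imports "HOL-Computational_Algebra.Polynomial" "HOL-Library.Poly_Mapping"
begin

text \<open>Laurent polynomials C[t,t^-1]: finitely supported maps int => complex;
  the basis element t^i is Poly_Mapping.single i 1, and the ring multiplication
  of the type is convolution, i.e. the product of Laurent polynomials.\<close>

type_synonym laurent = "int \<Rightarrow>\<^sub>0 complex"

definition lt :: "int \<Rightarrow> laurent" where
  "lt i = Poly_Mapping.single i 1"

definition lsmult :: "complex \<Rightarrow> laurent \<Rightarrow> laurent" where
  "lsmult c p = Poly_Mapping.map (\<lambda>a. c * a) p"

definition S :: "complex poly \<Rightarrow> (int \<Rightarrow> complex) set" where
  "S f = {lam. \<forall>i. poly f (lam i) = lam (i + 1)}"

definition period :: "(int \<Rightarrow> complex) \<Rightarrow> nat" where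
  "period lam = (THE n. {m::int. \<forall>i. lam (i + m) = lam i} = {k * int n | k. True})"

definition A_h :: "(int \<Rightarrow> complex) \<Rightarrow> laurent \<Rightarrow> laurent" where
  "A_h lam p = (\<Sum>i\<in>Poly_Mapping.keys p. lsmult (Poly_Mapping.lookup p i * lam i) (lt i))"

definition A_x :: "(int \<Rightarrow> complex) \<Rightarrow> complex \<Rightarrow> laurent \<Rightarrow> laurent" where
  "A_x lam z p = (\<Sum>i\<in>Poly_Mapping.keys p. lsmult (Poly_Mapping.lookup p i) (lt (i + 1)))"

definition A_y :: "(int \<Rightarrow> complex) \<Rightarrow> complex \<Rightarrow> laurent \<Rightarrow> laurent" where
  "A_y lam z p = (\<Sum>i\<in>Poly_Mapping.keys p. lsmult (Poly_Mapping.lookup p i * (lam i + z)) (lt (i - 1)))"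

definition B_h :: "(int \<Rightarrow> complex) \<Rightarrow> laurent \<Rightarrow> laurent" where
  "B_h lam p = (\<Sum>i\<in>Poly_Mapping.keys p. lsmult (Poly_Mapping.lookup p i * lam i) (lt i))"

definition B_x :: "(int \<Rightarrow> complex) \<Rightarrow> complex \<Rightarrow> laurent \<Rightarrow> laurent" where
  "B_x lam z p = (\<Sum>i\<in>Poly_Mapping.keys p. lsmult (Poly_Mapping.lookup p i * (lam (i + 1) + z)) (lt (i + 1)))"

definition B_y :: "(int \<Rightarrow> complex) \<Rightarrow> complex \<Rightarrow> laurent \<Rightarrow> laurent" where
  "B_y lam z p = (\<Sum>i\<in>Poly_Mapping.keys p. lsmult (Poly_Mapping.lookup p i) (lt (i - 1)))"

definition clinear_op :: "(laurent \<Rightarrow> laurent) \<Rightarrow> bool" where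
  "clinear_op T \<longleftrightarrow> (\<forall>p q. T (p + q) = T p + T q) \<and> (\<forall>c p. T (lsmult c p) = lsmult c (T p))"

definition op_poly :: "complex poly \<Rightarrow> (laurent \<Rightarrow> laurent) \<Rightarrow> laurent \<Rightarrow> laurent" where
  "op_poly f T p = (\<Sum>k\<le>degree f. lsmult (coeff f k) ((T ^^ k) p))"

text \<open>An H(f)-module structure on C[t,t^-1] is the same as linear operators X, Y, H
  (the actions of x, y, h) satisfying the defining relations of H(f):
  hx = x f(h), yh = f(h) y, yx - xy = f(h) - h.\<close>
definition Hf_module :: "complex poly \<Rightarrow> (laurent \<Rightarrow> laurent) \<Rightarrow> (laurent \<Rightarrow> laurent)
    \<Rightarrow> (laurent \<Rightarrow> laurent) \<Rightarrow> bool" where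
  "Hf_module f X Y H \<longleftrightarrow> clinear_op X \<and> clinear_op Y \<and> clinear_op H \<and>
     (\<forall>p. H (X p) = X (op_poly f H p)) \<and>
     (\<forall>p. Y (H p) = op_poly f H (Y p)) \<and>
     (\<forall>p. Y (X p) - X (Y p) = op_poly f H p - H p)"

definition Hf_submodule :: "(laurent \<Rightarrow> laurent) \<Rightarrow> (laurent \<Rightarrow> laurent)
    \<Rightarrow> (laurent \<Rightarrow> laurent) \<Rightarrow> laurent set \<Rightarrow> bool" where
  "Hf_submodule X Y H W \<longleftrightarrow> 0 \<in> W \<and> (\<forall>p\<in>W. \<forall>q\<in>W. p + q \<in> W) \<and>
     (\<forall>c. \<forall>p\<in>W. lsmult c p \<in> W) \<and> (\<forall>p\<in>W. X p \<in> W \<and> Y p \<in> W \<and> H p \<in> W)"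

definition simple_Hf_module :: "complex poly \<Rightarrow> (laurent \<Rightarrow> laurent) \<Rightarrow> (laurent \<Rightarrow> laurent)
    \<Rightarrow> (laurent \<Rightarrow> laurent) \<Rightarrow> bool" where
  "simple_Hf_module f X Y H \<longleftrightarrow> Hf_module f X Y H \<and> (UNIV :: laurent set) \<noteq> {0} \<and>
     (\<forall>W. Hf_submodule X Y H W \<longrightarrow> W = {0} \<or> W = UNIV)"

definition maximal_proper_nonzero_submodule :: "(laurent \<Rightarrow> laurent) \<Rightarrow> (laurent \<Rightarrow> laurent)
    \<Rightarrow> (laurent \<Rightarrow> laurent) \<Rightarrow> laurent set \<Rightarrow> bool" where
  "maximal_proper_nonzero_submodule X Y H W \<longleftrightarrow>
     Hf_submodule X Y H W \<and> W \<noteq> {0} \<and> W \<noteq> UNIV \<and>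
     (\<forall>W'. Hf_submodule X Y H W' \<and> W' \<noteq> UNIV \<and> W \<subseteq> W' \<longrightarrow> W' = W)"

definition in_C_tm :: "nat \<Rightarrow> laurent \<Rightarrow> bool" where
  "in_C_tm m g \<longleftrightarrow> (\<forall>i\<in>Poly_Mapping.keys g. i \<ge> 0 \<and> int m dvd i)"

definition h_eigenvector :: "(laurent \<Rightarrow> laurent) \<Rightarrow> laurent \<Rightarrow> bool" where
  "h_eigenvector H g \<longleftrightarrow> g \<noteq> 0 \<and> (\<exists>c. H g = lsmult c g)"

end

theory Submission
  imports Defs "HOL-Computational_Algebra.Fundamental_Theorem_Algebra"
begin


lemma lookup_lsmult [simp]: "Poly_Mapping.lookup (lsmult c p) j = c * Poly_Mapping.lookup p j"
  unfolding lsmult_def by (simp add: Poly_Mapping.map.rep_eq when_def)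

lemma lsmult_conv: "lsmult c p = Poly_Mapping.single 0 c * p"
  unfolding lsmult_def by (rule mult_map_scale_conv_mult)

lemma lookup_lt: "Poly_Mapping.lookup (lt i) j = (if i = j then 1 else 0)"
  unfolding lt_def by (simp add: lookup_single when_def)

lemma lookup_single_mult: "Poly_Mapping.lookup (Poly_Mapping.single a c * (p::laurent)) j = c * Poly_Mapping.lookup p (j - a)"
proof -
  have "Poly_Mapping.lookup (Poly_Mapping.single a c * p) j
     = Sum_any (\<lambda>l. (c * Sum_any (\<lambda>q. Poly_Mapping.lookup p q when j = l + q)) when a = l)"
    unfolding lookup_mult lookup_single by (simp add: when_mult)
  also have "\<dots> = c * Sum_any (\<lambda>q. Poly_Mapping.lookup p q when j = a + q)" by simp
  also have "Sum_any (\<lambda>q. Poly_Mapping.lookup p q when j = a + q) = Sum_any (\<lambda>q. Poly_Mapping.lookup p q when q = j - a)"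
  proof (rule Sum_any.cong)
    fix q
    have "(j = a + q) = (q = j - a)" by auto
    then show "(Poly_Mapping.lookup p q when j = a + q) = (Poly_Mapping.lookup p q when q = j - a)"
      by simp
  qed
  finally show ?thesis by simp
qed

lemma lookup_lt_mult: "Poly_Mapping.lookup (lt a * p) j = Poly_Mapping.lookup p (j - a)"
  unfolding lt_def by (simp add: lookup_single_mult)

lemma lookup_sum_keys:
  "Poly_Mapping.lookup (\<Sum>i\<in>Poly_Mapping.keys p. lsmult (c i) (lt (i + d))) j
     = (if j - d \<in> Poly_Mapping.keys p then c (j - d) else 0)"
proof -
  have "Poly_Mapping.lookup (\<Sum>i\<in>Poly_Mapping.keys p. lsmult (c i) (lt (i + d))) j
     = (\<Sum>i\<in>Poly_Mapping.keys p. if i = j - d then c i else 0)"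
  proof -
    have "\<And>i. Poly_Mapping.lookup (lsmult (c i) (lt (i + d))) j = (if i = j - d then c i else 0)"
      by (auto simp: lookup_lt)
    then show ?thesis by (simp only: lookup_sum)
  qed
  also have "\<dots> = (if j - d \<in> Poly_Mapping.keys p then c (j - d) else 0)"
    by (simp add: sum.delta')
  finally show ?thesis .
qed

lemma lookup_A_x: "Poly_Mapping.lookup (A_x lam z p) j = Poly_Mapping.lookup p (j - 1)"
  using lookup_sum_keys[where c="\<lambda>i. Poly_Mapping.lookup p i" and p=p and d="1" and j=j]
  by (auto simp: A_x_def in_keys_iff)

lemma lookup_A_y: "Poly_Mapping.lookup (A_y lam z p) j = (lam (j + 1) + z) * Poly_Mapping.lookup p (j + 1)"
  using lookup_sum_keys[where c="\<lambda>i. Poly_Mapping.lookup p i * (lam i + z)" and p=p and d="-1" and j=j]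
  by (auto simp: A_y_def in_keys_iff)

lemma lookup_A_h: "Poly_Mapping.lookup (A_h lam p) j = lam j * Poly_Mapping.lookup p j"
  using lookup_sum_keys[where c="\<lambda>i. Poly_Mapping.lookup p i * lam i" and p=p and d="0" and j=j]
  by (auto simp: A_h_def in_keys_iff)

lemma lookup_B_h: "Poly_Mapping.lookup (B_h lam p) j = lam j * Poly_Mapping.lookup p j"
  using lookup_sum_keys[where c="\<lambda>i. Poly_Mapping.lookup p i * lam i" and p=p and d="0" and j=j]
  by (auto simp: B_h_def in_keys_iff)

lemma lookup_B_x: "Poly_Mapping.lookup (B_x lam z p) j = (lam j + z) * Poly_Mapping.lookup p (j - 1)"
  using lookup_sum_keys[where c="\<lambda>i. Poly_Mapping.lookup p i * (lam (i + 1) + z)" and p=p and d="1" and j=j]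
  by (auto simp: B_x_def in_keys_iff)

lemma lookup_B_y: "Poly_Mapping.lookup (B_y lam z p) j = 1 * Poly_Mapping.lookup p (j + 1)"
  using lookup_sum_keys[where c="\<lambda>i. Poly_Mapping.lookup p i" and p=p and d="-1" and j=j]
  by (auto simp: B_y_def in_keys_iff)



abbreviation lk :: "laurent \<Rightarrow> int \<Rightarrow> complex" where "lk \<equiv> Poly_Mapping.lookup"

locale wm =
  fixes X Y H :: "laurent \<Rightarrow> laurent" and a b lam :: "int \<Rightarrow> complex" and z :: complex
  assumes lX: "\<And>p j. lk (X p) j = a j * lk p (j - 1)"
  and lY: "\<And>p j. lk (Y p) j = b (j + 1) * lk p (j + 1)"
  and lH: "\<And>p j. lk (H p) j = lam j * lk p j"
  and ab: "\<And>j. a j * b j = lam j + z"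
  and ab1: "(\<forall>j. a j = 1) \<or> (\<forall>j. b j = 1)"
  and per: "\<And>m j. (\<forall>i. lam (i + m) = lam i) \<Longrightarrow> a (j + m) = a j \<and> b (j + m) = b j"
begin

lemma Hpow: "lk ((H ^^ k) p) j = lam j ^ k * lk p j"
  by (induction k) (simp_all add: lH)

lemma op_poly_lookup: "lk (op_poly f H p) j = poly f (lam j) * lk p j"
  unfolding op_poly_def by (simp add: lookup_sum Hpow poly_altdef sum_distrib_right mult.assoc)

lemma clin_X: "clinear_op X"
  unfolding clinear_op_def by (auto intro!: poly_mapping_eqI simp: lookup_add lX algebra_simps)
lemma clin_Y: "clinear_op Y"
  unfolding clinear_op_def by (auto intro!: poly_mapping_eqI simp: lookup_add lY algebra_simps)
lemma clin_H: "clinear_op H"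
  unfolding clinear_op_def by (auto intro!: poly_mapping_eqI simp: lookup_add lH algebra_simps)

lemma module:
  assumes "lam \<in> S f"
  shows "Hf_module f X Y H"
proof -
  have f: "\<And>i. poly f (lam i) = lam (i + 1)" using assms by (simp add: S_def)
  have 1: "H (X p) = X (op_poly f H p)" for p
    by (rule poly_mapping_eqI) (simp add: lH lX op_poly_lookup f)
  have 2: "Y (H p) = op_poly f H (Y p)" for p
    by (rule poly_mapping_eqI) (simp add: lH lY op_poly_lookup f)
  have 3: "Y (X p) - X (Y p) = op_poly f H p - H p" for p
  proof (rule poly_mapping_eqI)
    fix j
    have "lk (Y (X p) - X (Y p)) j = (a (j+1) * b (j+1) - a j * b j) * lk p j"
      by (simp add: lookup_minus lX lY algebra_simps)
    also have "\<dots> = (lam (j+1) - lam j) * lk p j" by (simp add: ab)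
    also have "\<dots> = lk (op_poly f H p - H p) j"
      by (simp add: lookup_minus op_poly_lookup lH f algebra_simps)
    finally show "lk (Y (X p) - X (Y p)) j = lk (op_poly f H p - H p) j" .
  qed
  show ?thesis unfolding Hf_module_def using clin_X clin_Y clin_H 1 2 3 by blast
qed

end

interpretation A: wm "A_x lam z" "A_y lam z" "A_h lam" "\<lambda>_. 1" "\<lambda>j. lam j + z" lam z
  by unfold_locales (auto simp: lookup_A_x lookup_A_y lookup_A_h)

interpretation B: wm "B_x lam z" "B_y lam z" "B_h lam" "\<lambda>j. lam j + z" "\<lambda>_. 1" lam z
  by unfold_locales (auto simp: lookup_B_x lookup_B_y lookup_B_h)



definition pers :: "(int \<Rightarrow> complex) \<Rightarrow> int set" where
  "pers lam = {m. \<forall>i. lam (i + m) = lam i}"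

lemma pers_add: "m \<in> pers lam \<Longrightarrow> n \<in> pers lam \<Longrightarrow> m + n \<in> pers lam"
  unfolding pers_def by (simp flip: add.assoc)
lemma pers_uminus: "m \<in> pers lam \<Longrightarrow> - m \<in> pers lam"
  unfolding pers_def
proof (intro CollectI allI)
  fix i assume "m \<in> {m. \<forall>i. lam (i + m) = lam i}"
  then have "lam (i - m + m) = lam (i - m)" by blast
  then show "lam (i + - m) = lam i" by simp
qed
lemma pers_0: "0 \<in> pers lam" unfolding pers_def by simp
lemma pers_diff: "m \<in> pers lam \<Longrightarrow> n \<in> pers lam \<Longrightarrow> m - n \<in> pers lam"
  using pers_add pers_uminus by (metis diff_conv_add_uminus)
lemma pers_nat_mult: "m \<in> pers lam \<Longrightarrow> int n * m \<in> pers lam"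
proof (induction n)
  case 0 then show ?case by (simp add: pers_0)
next
  case (Suc n)
  have "int (Suc n) * m = int n * m + m" by (simp add: distrib_right)
  moreover have "int n * m \<in> pers lam" using Suc.IH Suc.prems .
  ultimately show ?case using pers_add[OF _ Suc.prems] by simp
qed
lemma pers_mult: assumes "m \<in> pers lam" shows "k * m \<in> pers lam"
proof (cases "k \<ge> 0")
  case True then show ?thesis using pers_nat_mult[OF assms, of "nat k"] by simp
next
  case False then show ?thesis using pers_uminus[OF pers_nat_mult[OF assms, of "nat (-k)"]] by simp
qed

lemma pers_gen: "\<exists>!n. pers lam = {k * int n | k. True}"

proof -
  have ex: "\<exists>n. pers lam = {k * int n | k. True}"
  proof (cases "pers lam = {0}")
    case True then show ?thesis by (intro exI[of _ 0]) auto
  next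
    case False
    then obtain m where m: "m \<in> pers lam" "m \<noteq> 0" using pers_0 by blast
    have "int (nat \<bar>m\<bar>) \<in> pers lam" using m pers_uminus[OF m(1)] by (cases "m \<ge> 0") auto
    then have exn: "\<exists>n. 0 < n \<and> int n \<in> pers lam" using m by (intro exI[of _ "nat \<bar>m\<bar>"]) auto
    define n where "n = (LEAST n. 0 < n \<and> int n \<in> pers lam)"
    have n: "0 < n" "int n \<in> pers lam" using LeastI_ex[OF exn] n_def by auto
    have nl: "\<And>k. 0 < k \<Longrightarrow> int k \<in> pers lam \<Longrightarrow> n \<le> k" using Least_le n_def by metis
    have "pers lam = {k * int n | k. True}"
    proof
      show "{k * int n | k. True} \<subseteq> pers lam" using pers_mult[OF n(2)] by auto
      show "pers lam \<subseteq> {k * int n | k. True}"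
      proof
        fix d assume d: "d \<in> pers lam"
        have "d mod int n = d - (d div int n) * int n" by (simp add: minus_div_mult_eq_mod)
        then have dm: "d mod int n \<in> pers lam" using pers_diff[OF d pers_mult[OF n(2)]] by simp
        have "d mod int n = 0"
        proof (rule ccontr)
          assume h: "d mod int n \<noteq> 0"
          have "0 \<le> d mod int n" "d mod int n < int n" using n(1) by auto
          then have "n \<le> nat (d mod int n)" using nl[of "nat (d mod int n)"] dm h by auto
          then have "int n \<le> d mod int n" using \<open>0 \<le> d mod int n\<close> by (simp add: le_nat_iff)
          then show False using \<open>d mod int n < int n\<close> by linarith
        qed
        then have "d = (d div int n) * int n" using div_mult_mod_eq[of d "int n"] by simp
        then show "d \<in> {k * int n | k. True}" by blast
      qed
    qed
    then show ?thesis by blast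
  qed
  have un: "n1 = n2" if "pers lam = {k * int n1 | k. True}" "pers lam = {k * int n2 | k. True}" for n1 n2
  proof -
    have "int n1 \<in> {k * int n1 | k. True}" by (intro CollectI exI[of _ 1]) simp
    then have "int n1 \<in> {k * int n2 | k. True}" using that by simp
    then have "int n2 dvd int n1" by (auto simp: dvd_def mult.commute)
    moreover have "int n2 \<in> {k * int n2 | k. True}" by (intro CollectI exI[of _ 1]) simp
    then have "int n2 \<in> pers lam" using that(2) by simp
    then have "int n2 \<in> {k * int n1 | k. True}" using that(1) by simp
    then have "int n1 dvd int n2" by (auto simp: dvd_def mult.commute)
    ultimately show ?thesis by (simp add: dvd_antisym)
  qed
  show ?thesis by (rule ex_ex1I[OF ex un])
qed

lemma period_spec: "pers lam = {k * int (period lam) | k. True}"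
proof -
  have "period lam = (THE n. pers lam = {k * int n | k. True})"
    by (simp add: period_def pers_def)
  then show ?thesis using theI'[OF pers_gen[of lam]] by simp
qed

lemma per_mem: "k * int (period lam) \<in> pers lam"
  by (subst period_spec) blast

lemma per_mult: "lam (i + k * int (period lam)) = lam i"
  using per_mem[of k lam] unfolding pers_def by blast

lemma per_dvd: assumes "\<forall>i. lam (i + d) = lam i" shows "int (period lam) dvd d"
proof -
  have "d \<in> pers lam" using assms by (simp add: pers_def)
  then have "d \<in> {k * int (period lam) | k. True}" by (subst (asm) period_spec)
  then obtain k where "d = k * int (period lam)" by blast
  then show ?thesis by simp
qed

lemma fwd: assumes "lam \<in> S f" "lam i = lam j" shows "lam (i + int s) = lam (j + int s)"
proof (induction s)
  case 0 then show ?case using assms by simp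
next
  case (Suc s)
  have f: "\<And>k. lam (k + 1) = poly f (lam k)" using assms(1) by (simp add: S_def)
  have "lam (i + int (Suc s)) = lam ((i + int s) + 1)" by (simp add: ac_simps)
  also have "\<dots> = poly f (lam (i + int s))" by (rule f)
  also have "\<dots> = poly f (lam (j + int s))" using Suc by simp
  also have "\<dots> = lam ((j + int s) + 1)" by (rule f[symmetric])
  also have "\<dots> = lam (j + int (Suc s))" by (simp add: ac_simps)
  finally show ?case .
qed

lemma distinct_res:
  assumes "lam \<in> S f" "period lam \<noteq> 0" "lam i = lam j"
  shows "int (period lam) dvd (j - i)"
proof (rule per_dvd, rule allI)
  fix l
  define m where "m = int (period lam)"
  have m1: "m \<ge> 1" using assms(2) m_def by simp
  define N where "N = \<bar>l - i\<bar>"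
  have N0: "N \<ge> 0" "-(l - i) \<le> N" unfolding N_def by auto
  have "N * 1 \<le> N * m" using mult_left_mono[OF m1 N0(1)] .
  then have s0: "l - i + N * m \<ge> 0" using N0 by linarith
  define s where "s = nat (l - i + N * m)"
  have "lam (i + int s) = lam (j + int s)" by (rule fwd[OF assms(1) assms(3)])
  moreover have "i + int s = l + N * m" using s0 s_def by simp
  moreover have "j + int s = (l + (j - i)) + N * m" using s0 s_def by simp
  moreover have "lam (l + N * m) = lam l" "lam ((l + (j - i)) + N * m) = lam (l + (j - i))"
    unfolding m_def by (rule per_mult)+
  ultimately show "lam (l + (j - i)) = lam l" by simp
qed

lemma sep0:
  assumes "lam \<in> S f" "period lam = 0" "i \<noteq> j"
  shows "\<exists>k::nat. lam (i - int k) \<noteq> lam (j - int k)"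
proof -
  have "\<not> (\<forall>l. lam (l + (j - i)) = lam l)" using per_dvd[of lam "j - i"] assms(2,3) by auto
  then obtain l where l: "lam (l + (j - i)) \<noteq> lam l" by blast
  define k where "k = nat \<bar>l - i\<bar>"
  define s where "s = nat (l - i + int k)"
  show ?thesis
  proof (intro exI[of _ k] notI)
    assume "lam (i - int k) = lam (j - int k)"
    from fwd[OF assms(1) this, of s] have "lam (i - int k + int s) = lam (j - int k + int s)" .
    moreover have "i - int k + int s = l" "j - int k + int s = l + (j - i)" unfolding s_def k_def by auto
    ultimately show False using l by simp
  qed
qed



lemma expand: "p = (\<Sum>i\<in>Poly_Mapping.keys p. lsmult (lk p i) (lt i))"
proof (rule poly_mapping_eqI)
  fix j
  have "lk (\<Sum>i\<in>Poly_Mapping.keys p. lsmult (lk p i) (lt i)) j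
      = (\<Sum>i\<in>Poly_Mapping.keys p. if i = j then lk p i else 0)"
  proof -
    have "\<And>i. lk (lsmult (lk p i) (lt i)) j = (if i = j then lk p i else 0)"
      by (auto simp: lookup_lt)
    then show ?thesis by (simp only: lookup_sum)
  qed
  also have "\<dots> = lk p j" by (simp add: sum.delta in_keys_iff)
  finally show "lk p j = lk (\<Sum>i\<in>Poly_Mapping.keys p. lsmult (lk p i) (lt i)) j" by simp
qed

lemma lsmult_lsmult: "lsmult c (lsmult d p) = lsmult (c * d) p"
  by (rule poly_mapping_eqI) simp

lemma lsmult_1: "lsmult 1 p = p"
  by (rule poly_mapping_eqI) simp

lemma lt_neq0: "lt i \<noteq> 0"
proof
  assume "lt i = 0"
  then have "lk (lt i) i = 0" by simp
  then show False by (simp add: lookup_lt)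
qed

context wm begin

lemma sub_minus: "Hf_submodule X Y H W \<Longrightarrow> p \<in> W \<Longrightarrow> q \<in> W \<Longrightarrow> p - q \<in> W"
proof -
  assume W: "Hf_submodule X Y H W" "p \<in> W" "q \<in> W"
  have "p - q = p + lsmult (-1) q" by (rule poly_mapping_eqI) (simp add: lookup_add lookup_minus)
  then show ?thesis using W unfolding Hf_submodule_def by metis
qed

lemma sub_sum: assumes W: "Hf_submodule X Y H W" shows "finite I \<Longrightarrow> (\<And>i. i \<in> I \<Longrightarrow> g i \<in> W) \<Longrightarrow> sum g I \<in> W"
proof (induction I rule: finite_induct)
  case empty then show ?case using W by (simp add: Hf_submodule_def)
next
  case (insert x F) then show ?case using W by (simp add: Hf_submodule_def)
qed

lemma sub_Xpow: "Hf_submodule X Y H W \<Longrightarrow> p \<in> W \<Longrightarrow> (X ^^ k) p \<in> W"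
  by (induction k) (auto simp: Hf_submodule_def)
lemma sub_Ypow: "Hf_submodule X Y H W \<Longrightarrow> p \<in> W \<Longrightarrow> (Y ^^ k) p \<in> W"
  by (induction k) (auto simp: Hf_submodule_def)

lemma Xpow: "lk ((X ^^ k) p) j = (\<Prod>l<k. a (j - int l)) * lk p (j - int k)"
proof (induction k arbitrary: j)
  case 0 then show ?case by simp
next
  case (Suc k)
  have "lk ((X ^^ Suc k) p) j = a j * ((\<Prod>l<k. a (j - 1 - int l)) * lk p (j - 1 - int k))"
    by (simp add: lX Suc)
  also have "\<dots> = (\<Prod>l<Suc k. a (j - int l)) * lk p (j - int (Suc k))"
  proof -
    have "(\<Prod>l<Suc k. a (j - int l)) = a j * (\<Prod>l<k. a (j - 1 - int l))"
      by (subst prod.lessThan_Suc_shift) (simp add: algebra_simps)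
    then show ?thesis by (simp add: algebra_simps)
  qed
  finally show ?case .
qed

lemma Ypow: "lk ((Y ^^ k) p) j = (\<Prod>l<k. b (j + 1 + int l)) * lk p (j + int k)"
proof (induction k arbitrary: j)
  case 0 then show ?case by simp
next
  case (Suc k)
  have "lk ((Y ^^ Suc k) p) j = b (j + 1) * ((\<Prod>l<k. b (j + 1 + 1 + int l)) * lk p (j + 1 + int k))"
    by (simp add: lY Suc)
  also have "\<dots> = (\<Prod>l<Suc k. b (j + 1 + int l)) * lk p (j + int (Suc k))"
  proof -
    have "(\<Prod>l<Suc k. b (j + 1 + int l)) = b (j + 1) * (\<Prod>l<k. b (j + 1 + 1 + int l))"
      by (subst prod.lessThan_Suc_shift) (simp add: algebra_simps)
    then show ?thesis by (simp add: algebra_simps)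
  qed
  finally show ?case .
qed

definition cc :: "nat \<Rightarrow> int \<Rightarrow> complex" where
  "cc k j = (\<Prod>l<k. a (j - int l)) * (\<Prod>l<k. b (j - int k + 1 + int l))"

lemma diag1: "lk ((X ^^ k) ((Y ^^ k) p)) j = cc k j * lk p j"
  by (simp add: Xpow Ypow cc_def)

lemma diag2: "lk ((X ^^ k) (H ((Y ^^ k) p))) j = cc k j * lam (j - int k) * lk p j"
  by (simp add: Xpow Ypow lH cc_def algebra_simps)

lemma cc_nz: "\<forall>j. a j \<noteq> 0 \<Longrightarrow> \<forall>j. b j \<noteq> 0 \<Longrightarrow> cc k j \<noteq> 0"
  by (simp add: cc_def)

lemma X_lt: "X (lt i) = lsmult (a (i + 1)) (lt (i + 1))"
  by (rule poly_mapping_eqI) (auto simp: lX lookup_lt)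
lemma Y_lt: "Y (lt i) = lsmult (b i) (lt (i - 1))"
  by (rule poly_mapping_eqI) (auto simp: lY lookup_lt)

end


lemma keys_empty_iff: "Poly_Mapping.keys (p::laurent) = {} \<longleftrightarrow> p = 0"
  by (metis in_keys_iff lookup_zero poly_mapping_eqI empty_iff keys_zero)

context wm begin

lemma lt_gen_all:
  assumes W: "Hf_submodule X Y H W" and na: "\<forall>j. a j \<noteq> 0" and nb: "\<forall>j. b j \<noteq> 0"
    and i: "lt i \<in> W"
  shows "W = UNIV"
proof -
  have all: "lt j \<in> W" for j
  proof (induction j rule: int_induct[where k=i])
    case base then show ?case by (rule i)
  next
    case (step1 j)
    have "lt (j + 1) = lsmult (1 / a (j + 1)) (X (lt j))"
      using na by (simp add: X_lt lsmult_lsmult lsmult_1)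
    then show ?case using step1 W by (simp add: Hf_submodule_def)
  next
    case (step2 j)
    have "lt (j - 1) = lsmult (1 / b j) (Y (lt j))"
      using nb by (simp add: Y_lt lsmult_lsmult lsmult_1)
    then show ?case using step2 W by (simp add: Hf_submodule_def)
  qed
  have "p \<in> W" for p
  proof -
    have "(\<Sum>i\<in>Poly_Mapping.keys p. lsmult (lk p i) (lt i)) \<in> W"
      by (rule sub_sum[OF W]) (use all W in \<open>auto simp: Hf_submodule_def\<close>)
    then show ?thesis using expand[of p] by simp
  qed
  then show ?thesis by blast
qed

lemma monomial_in:
  assumes S: "lam \<in> S f" and na: "\<forall>j. a j \<noteq> 0" and nb: "\<forall>j. b j \<noteq> 0" and p0: "period lam = 0"
    and W: "Hf_submodule X Y H W"
  shows "w \<in> W \<Longrightarrow> w \<noteq> 0 \<Longrightarrow> \<exists>i. lt i \<in> W"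
proof (induction "card (Poly_Mapping.keys w)" arbitrary: w rule: less_induct)
  case less
  have fin: "finite (Poly_Mapping.keys w)" by simp
  have ne: "Poly_Mapping.keys w \<noteq> {}" using less.prems keys_empty_iff by blast
  show ?case
  proof (cases "card (Poly_Mapping.keys w) = 1")
    case True
    then obtain i where ki: "Poly_Mapping.keys w = {i}" by (rule card_1_singletonE)
    have "w = lsmult (lk w i) (lt i)" using expand[of w] ki by simp
    moreover have nz: "lk w i \<noteq> 0" using ki by (simp add: in_keys_iff[symmetric])
    have "lsmult (1 / lk w i) (lsmult (lk w i) (lt i)) = lt i" using nz by (simp add: lsmult_lsmult lsmult_1)
    ultimately have "lt i = lsmult (1 / lk w i) w" by simp
    then have "lt i \<in> W" using W less.prems by (simp add: Hf_submodule_def)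
    then show ?thesis by blast
  next
    case False
    moreover have "card (Poly_Mapping.keys w) > 0" using ne fin by (simp add: card_gt_0_iff)
    ultimately have c2: "card (Poly_Mapping.keys w) \<ge> 2" by linarith
    obtain i where i: "i \<in> Poly_Mapping.keys w" using ne by blast
    have "card (Poly_Mapping.keys w - {i}) \<ge> 1" using c2 i fin by simp
    then obtain j where j: "j \<in> Poly_Mapping.keys w" "j \<noteq> i"
      by (metis Diff_empty Diff_iff card.empty insert_iff not_one_le_zero subsetI subset_Diff_insert subset_empty)
    obtain k where k: "lam (i - int k) \<noteq> lam (j - int k)" using sep0[OF S p0] j(2) by metis
    define v where "v = (X ^^ k) (H ((Y ^^ k) w)) - lsmult (lam (j - int k)) ((X ^^ k) ((Y ^^ k) w))"
    have lv: "lk v l = cc k l * (lam (l - int k) - lam (j - int k)) * lk w l" for l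
      unfolding v_def by (simp add: lookup_minus diag1 diag2 algebra_simps)
    have y: "(Y ^^ k) w \<in> W" using sub_Ypow[OF W less.prems(1)] .
    then have "H ((Y ^^ k) w) \<in> W" using W by (simp add: Hf_submodule_def)
    then have 1: "(X ^^ k) (H ((Y ^^ k) w)) \<in> W" using sub_Xpow[OF W] by blast
    have "(X ^^ k) ((Y ^^ k) w) \<in> W" using sub_Xpow[OF W y] .
    then have 2: "lsmult (lam (j - int k)) ((X ^^ k) ((Y ^^ k) w)) \<in> W" using W by (simp add: Hf_submodule_def)
    have vW: "v \<in> W" unfolding v_def by (rule sub_minus[OF W 1 2])
    have sub: "Poly_Mapping.keys v \<subseteq> Poly_Mapping.keys w - {j}"
      by (auto simp: in_keys_iff lv)
    have iv: "i \<in> Poly_Mapping.keys v"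
      using i k cc_nz[OF na nb] by (simp add: in_keys_iff lv)
    have "card (Poly_Mapping.keys v) < card (Poly_Mapping.keys w)"
    proof (rule psubset_card_mono[OF fin])
      show "Poly_Mapping.keys v \<subset> Poly_Mapping.keys w" using sub j(1) by blast
    qed
    moreover have "v \<noteq> 0" using iv by auto
    ultimately show ?thesis using less.hyps vW by blast
  qed
qed

lemma simple_if:
  assumes S: "lam \<in> S f" and na: "\<forall>j. a j \<noteq> 0" and nb: "\<forall>j. b j \<noteq> 0" and p0: "period lam = 0"
  shows "simple_Hf_module f X Y H"
proof -
  have "W = {0} \<or> W = UNIV" if W: "Hf_submodule X Y H W" for W
  proof (cases "W = {0}")
    case False
    then obtain w where "w \<in> W" "w \<noteq> 0" using W unfolding Hf_submodule_def by blast
    then obtain i where "lt i \<in> W" using monomial_in[OF S na nb p0 W] by blast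
    then show ?thesis using lt_gen_all[OF W na nb] by blast
  qed simp
  moreover have "(UNIV :: laurent set) \<noteq> {0}" using lt_neq0[of 0] by blast
  ultimately show ?thesis unfolding simple_Hf_module_def using module[OF S] by blast
qed

end


lemma lookup_mult_lt: "lk (p * lt a) j = lk p (j - a)"
  by (subst mult.commute) (rule lookup_lt_mult)

definition ev :: "complex \<Rightarrow> laurent \<Rightarrow> complex" where
  "ev t0 p = (\<Sum>i\<in>Poly_Mapping.keys p. lk p i * t0 powi i)"

lemma ev_superset: "finite K \<Longrightarrow> Poly_Mapping.keys p \<subseteq> K \<Longrightarrow> ev t0 p = (\<Sum>i\<in>K. lk p i * t0 powi i)"
  unfolding ev_def by (rule sum.mono_neutral_left) (auto simp: in_keys_iff)

lemma ev_diff: "ev t0 (p - q) = ev t0 p - ev t0 q"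
proof -
  let ?K = "Poly_Mapping.keys p \<union> Poly_Mapping.keys q"
  have "Poly_Mapping.keys (p - q) \<subseteq> ?K" by (auto simp: in_keys_iff lookup_minus)
  then have "ev t0 (p - q) = (\<Sum>i\<in>?K. lk (p - q) i * t0 powi i)" by (intro ev_superset) auto
  also have "\<dots> = (\<Sum>i\<in>?K. lk p i * t0 powi i) - (\<Sum>i\<in>?K. lk q i * t0 powi i)"
    by (simp add: lookup_mult_lt lookup_minus algebra_simps sum_subtractf)
  also have "\<dots> = ev t0 p - ev t0 q" using ev_superset[of ?K p t0] ev_superset[of ?K q t0] by simp
  finally show ?thesis .
qed

lemma ev_lsmult: "ev t0 (lsmult c p) = c * ev t0 p"
proof -
  have "Poly_Mapping.keys (lsmult c p) \<subseteq> Poly_Mapping.keys p" by (auto simp: in_keys_iff)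
  then have "ev t0 (lsmult c p) = (\<Sum>i\<in>Poly_Mapping.keys p. lk (lsmult c p) i * t0 powi i)"
    by (intro ev_superset) auto
  then show ?thesis by (simp add: ev_def sum_distrib_left mult.assoc)
qed

lemma ev_lt_mult: assumes "t0 \<noteq> 0" shows "ev t0 (lt m * p) = t0 powi m * ev t0 p"
proof -
  let ?K = "(\<lambda>i. i + m) ` Poly_Mapping.keys p"
  have "Poly_Mapping.keys (lt m * p) \<subseteq> ?K"
  proof
    fix j assume "j \<in> Poly_Mapping.keys (lt m * p)"
    then have "j - m \<in> Poly_Mapping.keys p" by (simp add: in_keys_iff lookup_lt_mult)
    then show "j \<in> ?K" by (metis diff_add_cancel imageI)
  qed
  then have "ev t0 (lt m * p) = (\<Sum>i\<in>?K. lk (lt m * p) i * t0 powi i)" by (intro ev_superset) auto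
  also have "\<dots> = (\<Sum>i\<in>Poly_Mapping.keys p. lk (lt m * p) (i + m) * t0 powi (i + m))"
    by (subst sum.reindex) (auto simp: inj_on_def)
  also have "\<dots> = (\<Sum>i\<in>Poly_Mapping.keys p. t0 powi m * (lk p i * t0 powi i))"
    by (rule sum.cong) (auto simp: lookup_lt_mult power_int_add assms)
  also have "\<dots> = t0 powi m * ev t0 p" by (simp add: ev_def sum_distrib_left)
  finally show ?thesis .
qed

lemma ev_one: "ev t0 1 = 1"
  by (simp add: ev_def)

lemma mult_u: "p * (lt m - lsmult c (lt 0)) = lt m * p - lsmult c p"
  by (simp add: lsmult_conv lt_def mult_single algebra_simps)

lemma ex_root: assumes "n > 0" shows "\<exists>t::complex. t ^ n = c"
proof -
  let ?p = "monom 1 n - [:c:]"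
  have "\<not> (\<exists>a l. a \<noteq> 0 \<and> l = 0 \<and> ?p = pCons a l)"
  proof
    assume "\<exists>a l. a \<noteq> 0 \<and> l = 0 \<and> ?p = pCons a l"
    then obtain a where "?p = pCons a 0" by blast
    then have "coeff ?p n = coeff (pCons a 0) n" by simp
    then show False using assms by (simp add: coeff_pCons split: nat.splits)
  qed
  then obtain t where "poly ?p t = 0" using fundamental_theorem_of_algebra_alt by blast
  then show ?thesis by (intro exI[of _ t]) (simp add: poly_monom)
qed

lemma one_notin_ideal:
  assumes "c \<noteq> 0" "m > 0"
  shows "(1::laurent) \<notin> {p * (lt m - lsmult c (lt 0)) | p. True}"
proof
  obtain t0 where t0: "t0 ^ nat m = c" using ex_root[of "nat m" c] assms by auto
  have t0nz: "t0 \<noteq> 0" using t0 assms by auto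
  have tm: "t0 powi m = c" using t0 assms by (simp add: power_int_def)
  assume "(1::laurent) \<in> {p * (lt m - lsmult c (lt 0)) | p. True}"
  then obtain p where "1 = p * (lt m - lsmult c (lt 0))" by blast
  then have "ev t0 1 = ev t0 (lt m * p - lsmult c p)" by (simp add: mult_u)
  then have "1 = c * ev t0 p - c * ev t0 p" by (simp add: ev_one ev_diff ev_lsmult ev_lt_mult t0nz tm)
  then show False by simp
qed

context wm begin

lemma notsimple_b:
  assumes "b i0 = 0"
  shows "\<exists>W. Hf_submodule X Y H W \<and> W \<noteq> {0} \<and> W \<noteq> UNIV"
proof (intro exI conjI)
  let ?U = "{p. \<forall>k<i0. lk p k = 0}"
  show "Hf_submodule X Y H ?U"
    unfolding Hf_submodule_def
  proof (intro conjI ballI allI)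
    fix p assume p: "p \<in> ?U"
    show "X p \<in> ?U" using p by (simp add: lX)
    show "H p \<in> ?U" using p by (simp add: lH)
    show "Y p \<in> ?U"
    proof (rule CollectI, intro allI impI)
      fix k assume k: "k < i0"
      show "lk (Y p) k = 0"
      proof (cases "k + 1 = i0")
        case True then show ?thesis using assms by (simp add: lY)
      next
        case False then show ?thesis using p k by (simp add: lY)
      qed
    qed
  qed (auto simp: lookup_add)
  show "?U \<noteq> {0}"
  proof
    assume "?U = {0}"
    moreover have "lt i0 \<in> ?U" by (simp add: lookup_lt)
    ultimately show False using lt_neq0 by blast
  qed
  show "?U \<noteq> UNIV"
  proof
    assume "?U = UNIV"
    then have "lt (i0 - 1) \<in> ?U" by blast
    then have "lk (lt (i0 - 1)) (i0 - 1) = 0" by simp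
    then show False by (simp add: lookup_lt)
  qed
qed

lemma notsimple_a:
  assumes "a i0 = 0"
  shows "\<exists>W. Hf_submodule X Y H W \<and> W \<noteq> {0} \<and> W \<noteq> UNIV"
proof (intro exI conjI)
  let ?U = "{p. \<forall>k\<ge>i0. lk p k = 0}"
  show "Hf_submodule X Y H ?U"
    unfolding Hf_submodule_def
  proof (intro conjI ballI allI)
    fix p assume p: "p \<in> ?U"
    show "Y p \<in> ?U" using p by (simp add: lY)
    show "H p \<in> ?U" using p by (simp add: lH)
    show "X p \<in> ?U"
    proof (rule CollectI, intro allI impI)
      fix k assume k: "i0 \<le> k"
      show "lk (X p) k = 0"
      proof (cases "k = i0")
        case True then show ?thesis using assms by (simp add: lX)
      next
        case False then show ?thesis using p k by (simp add: lX)
      qed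
    qed
  qed (auto simp: lookup_add)
  show "?U \<noteq> {0}"
  proof
    assume "?U = {0}"
    moreover have "lt (i0 - 1) \<in> ?U" by (simp add: lookup_lt)
    ultimately show False using lt_neq0 by blast
  qed
  show "?U \<noteq> UNIV"
  proof
    assume "?U = UNIV"
    then have "lt i0 \<in> ?U" by blast
    then have "lk (lt i0) i0 = 0" by simp
    then show False by (simp add: lookup_lt)
  qed
qed

lemma per_ab: "a (j + int (period lam)) = a j" "b (j + int (period lam)) = b j"
  using per[of "int (period lam)" j] per_mult[of lam _ 1] by auto

lemma ideal_sub:
  fixes c :: complex
  defines "m \<equiv> int (period lam)"
  shows "Hf_submodule X Y H {p * (lt m - lsmult c (lt 0)) | p. True}"
proof -
  let ?u = "lt m - lsmult c (lt 0)"
  have pa: "a (j - m) = a j" "b (j - m) = b j" "lam (j - m) = lam j" for j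
    using per_ab[of "j - m"] per_mult[of lam "j - m" 1] unfolding m_def by auto
  have cX: "X (p * ?u) = X p * ?u" for p
    by (rule poly_mapping_eqI) (simp only: mult_u, simp add: lookup_mult_lt lookup_minus lX lookup_lt_mult pa algebra_simps)
  have cY: "Y (p * ?u) = Y p * ?u" for p
  proof (rule poly_mapping_eqI)
    fix j
    have "b (j + 1 - m) = b (j + 1)" by (rule pa)
    then show "lk (Y (p * ?u)) j = lk (Y p * ?u) j"
      by (simp only: mult_u, simp add: lookup_mult_lt lookup_minus lY lookup_lt_mult algebra_simps)
  qed
  have cH: "H (p * ?u) = H p * ?u" for p
    by (rule poly_mapping_eqI) (simp only: mult_u, simp add: lookup_mult_lt lookup_minus lH lookup_lt_mult pa algebra_simps)
  show ?thesis
    unfolding Hf_submodule_def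
  proof (intro conjI ballI allI)
    show "0 \<in> {p * ?u | p. True}" by (intro CollectI exI[of _ 0]) simp
  next
    fix p q assume "p \<in> {p * ?u | p. True}" "q \<in> {p * ?u | p. True}"
    then obtain p' q' where "p = p' * ?u" "q = q' * ?u" by blast
    then show "p + q \<in> {p * ?u | p. True}" by (intro CollectI exI[of _ "p' + q'"]) (simp add: distrib_right)
  next
    fix d p assume "p \<in> {p * ?u | p. True}"
    then obtain p' where "p = p' * ?u" by blast
    then show "lsmult d p \<in> {p * ?u | p. True}"
      by (intro CollectI exI[of _ "lsmult d p'"]) (simp add: lsmult_conv mult.assoc)
  next
    fix p assume "p \<in> {p * ?u | p. True}"
    then obtain p' where p': "p = p' * ?u" by blast
    show "X p \<in> {p * ?u | p. True}" using cX p' by blast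
    show "Y p \<in> {p * ?u | p. True}" using cY p' by blast
    show "H p \<in> {p * ?u | p. True}" using cH p' by blast
  qed
qed

lemma notsimple_per:
  assumes "period lam \<noteq> 0"
  shows "\<exists>W. Hf_submodule X Y H W \<and> W \<noteq> {0} \<and> W \<noteq> UNIV"
proof (intro exI conjI)
  let ?m = "int (period lam)"
  let ?I = "{p * (lt ?m - lsmult 1 (lt 0)) | p. True}"
  show "Hf_submodule X Y H ?I" by (rule ideal_sub)
  show "?I \<noteq> UNIV"
  proof
    assume "?I = UNIV"
    moreover have "(1::laurent) \<notin> ?I" using one_notin_ideal[of 1 ?m] assms by simp
    ultimately show False by blast
  qed
  have "lt ?m - lsmult 1 (lt 0) \<in> ?I" by (intro CollectI exI[of _ 1]) simp
  moreover have "lt ?m - lsmult 1 (lt 0) \<noteq> 0"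
  proof
    assume "lt ?m - lsmult 1 (lt 0) = 0"
    then have "lk (lt ?m - lsmult 1 (lt 0)) ?m = 0" by simp
    then show False using assms by (simp add: lookup_mult_lt lookup_minus lookup_lt)
  qed
  ultimately show "?I \<noteq> {0}" by blast
qed

lemma simple_iff:
  assumes S: "lam \<in> S f"
  shows "simple_Hf_module f X Y H \<longleftrightarrow> (\<forall>j. a j \<noteq> 0 \<and> b j \<noteq> 0) \<and> period lam = 0"
proof
  assume s: "simple_Hf_module f X Y H"
  then have nW: "\<not> (\<exists>W. Hf_submodule X Y H W \<and> W \<noteq> {0} \<and> W \<noteq> UNIV)"
    unfolding simple_Hf_module_def by blast
  show "(\<forall>j. a j \<noteq> 0 \<and> b j \<noteq> 0) \<and> period lam = 0"
    using nW notsimple_a notsimple_b notsimple_per by blast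
next
  assume "(\<forall>j. a j \<noteq> 0 \<and> b j \<noteq> 0) \<and> period lam = 0"
  then show "simple_Hf_module f X Y H" using simple_if[OF S] by blast
qed

end


lemma lt_mult_lt: "lt a * lt b = lt (a + b)"
  by (simp add: lt_def mult_single)

lemma lt0_one: "lt 0 = 1"
  by (simp add: lt_def)

lemma keys_bounded: "\<exists>L::int. L \<ge> 0 \<and> Poly_Mapping.keys w \<subseteq> {-L..L}"
proof (intro exI conjI)
  let ?L = "Max (insert 0 (abs ` Poly_Mapping.keys w))"
  show "?L \<ge> 0" by simp
  show "Poly_Mapping.keys w \<subseteq> {-?L..?L}"
  proof
    fix x assume "x \<in> Poly_Mapping.keys w"
    then have "\<bar>x\<bar> \<le> ?L" by (intro Max_ge) auto
    then have "- ?L \<le> x" "x \<le> ?L" by linarith+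
    then show "x \<in> {-?L..?L}" by (simp only: atLeastAtMost_iff)
  qed
qed

context wm begin

definition closedm :: "laurent set \<Rightarrow> laurent \<Rightarrow> bool" where
  "closedm W q \<longleftrightarrow> (\<forall>w\<in>W. q * w \<in> W)"

lemma closedm_mult: "closedm W q1 \<Longrightarrow> closedm W q2 \<Longrightarrow> closedm W (q1 * q2)"
  unfolding closedm_def by (simp add: mult.assoc)

lemma closedm_pow: "closedm W (lt d) \<Longrightarrow> closedm W (lt (int k * d))"
proof (induction k)
  case 0 then show ?case by (simp add: closedm_def lt0_one)
next
  case (Suc k)
  have "lt (int (Suc k) * d) = lt d * lt (int k * d)" by (simp add: lt_mult_lt algebra_simps)
  then show ?case using closedm_mult[OF Suc.prems Suc.IH[OF Suc.prems]] by simp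
qed

lemma prodX_const:
  assumes na: "\<forall>j. a j \<noteq> 0"
  shows "(\<Prod>l<period lam. a (j - int l)) = (\<Prod>l<period lam. a (0 - int l))"
proof -
  let ?n = "period lam"
  let ?Q = "\<lambda>j. \<Prod>l<?n. a (j - int l)"
  have step: "?Q (j + 1) = ?Q j" for j
  proof -
    have "(\<Prod>l<Suc ?n. a (j + 1 - int l)) = a (j + 1) * ?Q j"
      by (subst prod.lessThan_Suc_shift) (simp add: algebra_simps)
    moreover have "(\<Prod>l<Suc ?n. a (j + 1 - int l)) = ?Q (j + 1) * a (j + 1 - int ?n)"
      by (simp add: prod.lessThan_Suc)
    moreover have "a (j + 1 - int ?n) = a (j + 1)" using per_ab(1)[of "j + 1 - int ?n"] by simp
    ultimately show ?thesis using na by (metis mult.commute mult_cancel_left)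
  qed
  show ?thesis
  proof (induction j rule: int_induct[where k=0])
    case base then show ?case by simp
  next
    case (step1 i) then show ?case using step by simp
  next
    case (step2 i) then show ?case using step[of "i - 1"] by simp
  qed
qed

lemma prodY_const:
  assumes nb: "\<forall>j. b j \<noteq> 0"
  shows "(\<Prod>l<period lam. b (j + 1 + int l)) = (\<Prod>l<period lam. b (0 + 1 + int l))"
proof -
  let ?n = "period lam"
  let ?Q = "\<lambda>j. \<Prod>l<?n. b (j + 1 + int l)"
  have step: "?Q (j + 1) = ?Q j" for j
  proof -
    have "(\<Prod>l<Suc ?n. b (j + 1 + int l)) = b (j + 1) * ?Q (j + 1)"
      by (subst prod.lessThan_Suc_shift) (simp add: algebra_simps)
    moreover have "(\<Prod>l<Suc ?n. b (j + 1 + int l)) = ?Q j * b (j + 1 + int ?n)"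
      by (simp add: prod.lessThan_Suc)
    moreover have "b (j + 1 + int ?n) = b (j + 1)" using per_ab(2)[of "j + 1"] by simp
    ultimately show ?thesis using nb by (metis mult.commute mult_cancel_left)
  qed
  show ?thesis
  proof (induction j rule: int_induct[where k=0])
    case base then show ?case by simp
  next
    case (step1 i) then show ?case using step by simp
  next
    case (step2 i) then show ?case using step[of "i - 1"] by simp
  qed
qed

lemma closed_all:
  assumes na: "\<forall>j. a j \<noteq> 0" and nb: "\<forall>j. b j \<noteq> 0" and pn: "period lam \<noteq> 0"
    and W: "Hf_submodule X Y H W" and wW: "w \<in> W"
  shows "q * w \<in> W"
proof -
  let ?n = "period lam"
  define CX where "CX = (\<Prod>l<?n. a (0 - int l))"
  define CY where "CY = (\<Prod>l<?n. b (0 + 1 + int l))"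
  have CXn: "CX \<noteq> 0" "CY \<noteq> 0" using na nb by (auto simp: CX_def CY_def)
  have Xn: "(X ^^ ?n) p = lsmult CX (lt (int ?n) * p)" for p
    by (rule poly_mapping_eqI) (simp add: Xpow prodX_const[OF na] CX_def lookup_lt_mult)
  have Yn: "(Y ^^ ?n) p = lsmult CY (lt (- int ?n) * p)" for p
    by (rule poly_mapping_eqI) (simp add: Ypow prodY_const[OF nb] CY_def lookup_lt_mult)
  have cP: "closedm W (lt (int ?n))"
    unfolding closedm_def
  proof
    fix w assume w: "w \<in> W"
    have "lt (int ?n) * w = lsmult (1 / CX) ((X ^^ ?n) w)" using CXn by (simp add: Xn lsmult_lsmult lsmult_1)
    then show "lt (int ?n) * w \<in> W" using sub_Xpow[OF W w] W by (simp add: Hf_submodule_def)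
  qed
  have cM: "closedm W (lt (- int ?n))"
    unfolding closedm_def
  proof
    fix w assume w: "w \<in> W"
    have "lt (- int ?n) * w = lsmult (1 / CY) ((Y ^^ ?n) w)" using CXn by (simp add: Yn lsmult_lsmult lsmult_1)
    then show "lt (- int ?n) * w \<in> W" using sub_Ypow[OF W w] W by (simp add: Hf_submodule_def)
  qed
  have c1: "closedm W (lt 1) \<and> closedm W (lt (-1))"
    using ab1
  proof
    assume a1: "\<forall>j. a j = 1"
    have "X p = lt 1 * p" for p by (rule poly_mapping_eqI) (simp add: lX a1 lookup_lt_mult)
    then have p1: "closedm W (lt 1)" using W by (simp add: closedm_def Hf_submodule_def)
    have "lt (-1) = lt (int (?n - 1) * 1) * lt (- int ?n)" using pn by (simp add: lt_mult_lt)
    then show ?thesis using closedm_mult[OF closedm_pow[OF p1] cM] p1 by simp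
  next
    assume b1: "\<forall>j. b j = 1"
    have "Y p = lt (-1) * p" for p by (rule poly_mapping_eqI) (simp add: lY b1 lookup_lt_mult)
    then have m1: "closedm W (lt (-1))" using W by (simp add: closedm_def Hf_submodule_def)
    have "lt 1 = lt (int (?n - 1) * (-1)) * lt (int ?n)" using pn by (simp add: lt_mult_lt)
    then show ?thesis using closedm_mult[OF closedm_pow[OF m1] cP] m1 by simp
  qed
  have call: "closedm W (lt i)" for i
  proof (induction i rule: int_induct[where k=0])
    case base then show ?case by (simp add: closedm_def lt0_one)
  next
    case (step1 i) then show ?case using closedm_mult[OF conjunct1[OF c1] step1(2)] by (simp add: lt_mult_lt add.commute)
  next
    case (step2 i) then show ?case using closedm_mult[OF conjunct2[OF c1] step2(2)] by (simp add: lt_mult_lt)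
  qed
  have "q * w = (\<Sum>i\<in>Poly_Mapping.keys q. lsmult (lk q i) (lt i * w))"
  proof -
    have "q * w = (\<Sum>i\<in>Poly_Mapping.keys q. lsmult (lk q i) (lt i)) * w" using expand[of q] by simp
    also have "\<dots> = (\<Sum>i\<in>Poly_Mapping.keys q. lsmult (lk q i) (lt i * w))"
      by (simp add: sum_distrib_right lsmult_conv mult.assoc)
    finally show ?thesis .
  qed
  also have "\<dots> \<in> W"
    by (rule sub_sum[OF W]) (use call wW W in \<open>auto simp: closedm_def Hf_submodule_def\<close>)
  finally show ?thesis .
qed

end


lemma in_keys_shift: "j \<in> Poly_Mapping.keys (lt d * w) \<longleftrightarrow> j - d \<in> Poly_Mapping.keys w"
  by (simp add: in_keys_iff lookup_lt_mult)

context wm begin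

lemma sub_lsmult: "Hf_submodule X Y H W \<Longrightarrow> p \<in> W \<Longrightarrow> lsmult c p \<in> W"
  by (simp add: Hf_submodule_def)

lemma gen_exists:
  assumes S: "lam \<in> S f" and na: "\<forall>j. a j \<noteq> 0" and nb: "\<forall>j. b j \<noteq> 0" and pn: "period lam \<noteq> 0"
    and W: "Hf_submodule X Y H W" and nz: "W \<noteq> {0}"
  shows "\<exists>g n0. g \<in> W \<and> g \<noteq> 0 \<and> Poly_Mapping.keys g \<subseteq> {0..int n0} \<and> lk g 0 \<noteq> 0 \<and> lk g (int n0) \<noteq> 0
     \<and> H g = lsmult (lam 0) g \<and> (\<forall>j\<in>Poly_Mapping.keys g. int (period lam) dvd j) \<and> W = {p * g | p. True}"
proof -
  have cl: "\<And>q w. w \<in> W \<Longrightarrow> q * w \<in> W" using closed_all[OF na nb pn W] by blast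
  define Pn where "Pn n \<longleftrightarrow> (\<exists>w\<in>W. w \<noteq> 0 \<and> Poly_Mapping.keys w \<subseteq> {0..int n})" for n
  have shift: "lt (- lo) * w \<in> W \<and> lt (- lo) * w \<noteq> 0 \<and> Poly_Mapping.keys (lt (- lo) * w) \<subseteq> {0..hi - lo}"
    if h: "w \<in> W" "w \<noteq> 0" "Poly_Mapping.keys w \<subseteq> {lo..hi}" for w lo hi
  proof (intro conjI)
    show "lt (- lo) * w \<in> W" using cl h(1) .
    obtain i where "i \<in> Poly_Mapping.keys w" using h(2) keys_empty_iff by blast
    then have "i - lo \<in> Poly_Mapping.keys (lt (- lo) * w)" by (simp add: in_keys_shift)
    then show "lt (- lo) * w \<noteq> 0" by auto
    show "Poly_Mapping.keys (lt (- lo) * w) \<subseteq> {0..hi - lo}"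
      using h(3) by (auto simp: in_keys_shift)
  qed
  have minl: "\<And>n. Pn n \<Longrightarrow> (LEAST n. Pn n) \<le> n" by (rule Least_le)
  obtain w0 where w0: "w0 \<in> W" "w0 \<noteq> 0" using nz W unfolding Hf_submodule_def by blast
  obtain L where L: "L \<ge> 0" "Poly_Mapping.keys w0 \<subseteq> {-L..L}" using keys_bounded by blast
  have sh0: "lt (- (-L)) * w0 \<in> W" "lt (- (-L)) * w0 \<noteq> 0" "Poly_Mapping.keys (lt (-(-L)) * w0) \<subseteq> {0..L - -L}"
    using shift[OF w0 L(2)] by blast+
  have "{0..L - -L} = {0..int (nat (2*L))}" using L(1) by simp
  then have "Pn (nat (2 * L))" unfolding Pn_def using sh0 by (intro bexI[of _ "lt (- (-L)) * w0"]) (simp_all only:; simp)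
  then have exP: "\<exists>n. Pn n" by blast
  define n0 where "n0 = (LEAST n. Pn n)"
  obtain g where g: "g \<in> W" "g \<noteq> 0" "Poly_Mapping.keys g \<subseteq> {0..int n0}"
    using LeastI_ex[OF exP] unfolding n0_def Pn_def by blast
  have mins: "int n0 \<le> hi - lo" if "w \<in> W" "w \<noteq> 0" "Poly_Mapping.keys w \<subseteq> {lo..hi}" for w lo hi
  proof -
    have sh: "lt (- lo) * w \<in> W" "lt (- lo) * w \<noteq> 0" "Poly_Mapping.keys (lt (- lo) * w) \<subseteq> {0..hi - lo}"
      using shift[OF that] by auto
    obtain i where "i \<in> Poly_Mapping.keys (lt (- lo) * w)" using sh(2) keys_empty_iff by blast
    then have hl: "hi - lo \<ge> 0" using sh(3) by auto
    have "Pn (nat (hi - lo))" unfolding Pn_def using sh hl by (intro bexI[of _ "lt (- lo) * w"]) auto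
    then have "n0 \<le> nat (hi - lo)" unfolding n0_def by (rule minl)
    then show ?thesis using hl by linarith
  qed
  have g0: "lk g 0 \<noteq> 0"
  proof
    assume z: "lk g 0 = 0"
    have "Poly_Mapping.keys g \<subseteq> {1..int n0}"
    proof
      fix j assume j: "j \<in> Poly_Mapping.keys g"
      then have "j \<noteq> 0" using z by (auto simp: in_keys_iff)
      moreover have "j \<in> {0..int n0}" using g(3) j by blast
      ultimately show "j \<in> {1..int n0}" by simp
    qed
    from mins[OF g(1,2) this] show False by simp
  qed
  have gn: "lk g (int n0) \<noteq> 0"
  proof
    assume z: "lk g (int n0) = 0"
    have "Poly_Mapping.keys g \<subseteq> {0..int n0 - 1}"
    proof
      fix j assume j: "j \<in> Poly_Mapping.keys g"
      then have "j \<noteq> int n0" using z by (auto simp: in_keys_iff)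
      moreover have "j \<in> {0..int n0}" using g(3) j by blast
      ultimately show "j \<in> {0..int n0 - 1}" by simp
    qed
    from mins[OF g(1,2) this] show False by simp
  qed
  define v where "v = H g - lsmult (lam 0) g"
  have lv: "lk v j = (lam j - lam 0) * lk g j" for j by (simp add: v_def lookup_minus lH algebra_simps)
  have vW: "v \<in> W" unfolding v_def using W g(1) by (intro sub_minus[OF W]) (auto simp: Hf_submodule_def)
  have v0: "v = 0"
  proof (rule ccontr)
    assume vn: "v \<noteq> 0"
    have kv: "Poly_Mapping.keys v \<subseteq> {1..int n0}"
    proof
      fix j assume j: "j \<in> Poly_Mapping.keys v"
      then have "j \<in> Poly_Mapping.keys g" "j \<noteq> 0" by (auto simp: in_keys_iff lv)
      then show "j \<in> {1..int n0}" using g(3) by force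
    qed
    from mins[OF vW vn kv] show False by simp
  qed
  have Hg: "H g = lsmult (lam 0) g" using v0 unfolding v_def by simp
  have dv: "\<forall>j\<in>Poly_Mapping.keys g. int (period lam) dvd j"
  proof
    fix j assume "j \<in> Poly_Mapping.keys g"
    then have "lam 0 = lam j" using lv[of j] v0 by (simp add: in_keys_iff)
    from distinct_res[OF S pn this] show "int (period lam) dvd j" by simp
  qed
  have step: "\<exists>w'. w' \<in> W \<and> Poly_Mapping.keys w' \<subseteq> {lo..lo + int n - 1} \<and> (\<exists>q. w = w' + q * g)"
    if w: "w \<in> W" "Poly_Mapping.keys w \<subseteq> {lo..lo + int n}" for w lo n
  proof (cases "w = 0")
    case True then show ?thesis using W by (intro exI[of _ 0]) (auto simp: Hf_submodule_def)
  next
    case False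
    have nn: "int n0 \<le> int n" using mins[OF w(1) False w(2)] by simp
    define M where "M = lo + int n"
    define D where "D = M - int n0"
    define c where "c = lk w M / lk g (int n0)"
    define w' where "w' = w - lsmult c (lt D * g)"
    have w'W: "w' \<in> W" unfolding w'_def by (intro sub_minus[OF W w(1)] sub_lsmult[OF W] cl g(1))
    have lw': "lk w' j = lk w j - c * lk g (j - D)" for j by (simp add: w'_def lookup_minus lookup_lt_mult)
    have "Poly_Mapping.keys w' \<subseteq> {lo..lo + int n - 1}"
    proof
      fix j assume j: "j \<in> Poly_Mapping.keys w'"
      have "lk w' M = 0" using gn by (simp add: lw' c_def D_def)
      then have "j \<noteq> M" using j by (auto simp: in_keys_iff)
      moreover have "lo \<le> j \<and> j \<le> M"
      proof (cases "lk w j = 0")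
        case True
        then have "j - D \<in> Poly_Mapping.keys g" using j by (auto simp: in_keys_iff lw')
        then show ?thesis using g(3) nn unfolding D_def M_def by auto
      next
        case False
        then show ?thesis using w(2) unfolding M_def by (auto simp: in_keys_iff[symmetric])
      qed
      ultimately show "j \<in> {lo..lo + int n - 1}" unfolding M_def by auto
    qed
    moreover have "w = w' + lsmult c (lt D) * g" by (simp add: w'_def lsmult_conv mult.assoc)
    ultimately show ?thesis using w'W by blast
  qed
  have red: "\<forall>w lo. w \<in> W \<longrightarrow> Poly_Mapping.keys w \<subseteq> {lo..lo + int n} \<longrightarrow> (\<exists>p. w = p * g)" for n
  proof (induction n)
    case 0
    show ?case
    proof (intro allI impI)
      fix w lo assume "w \<in> W" "Poly_Mapping.keys w \<subseteq> {lo..lo + int 0}"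
      then obtain w' q where "Poly_Mapping.keys w' \<subseteq> {lo..lo + int 0 - 1}" "w = w' + q * g"
        using step by blast
      moreover then have "w' = 0" using keys_empty_iff by fastforce
      ultimately show "\<exists>p. w = p * g" by auto
    qed
  next
    case (Suc n)
    show ?case
    proof (intro allI impI)
      fix w lo assume "w \<in> W" "Poly_Mapping.keys w \<subseteq> {lo..lo + int (Suc n)}"
      then obtain w' q where "w' \<in> W" "Poly_Mapping.keys w' \<subseteq> {lo..lo + int (Suc n) - 1}" "w = w' + q * g"
        using step by blast
      moreover from Suc.IH this(1,2) obtain p where "w' = p * g" by auto
      ultimately show "\<exists>p. w = p * g" by (intro exI[of _ "p + q"]) (simp add: distrib_right)
    qed
  qed
  have "W = {p * g | p. True}"
  proof
    show "{p * g | p. True} \<subseteq> W" using cl g(1) by blast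
    show "W \<subseteq> {p * g | p. True}"
    proof
      fix w assume w: "w \<in> W"
      obtain L where L: "L \<ge> 0" "Poly_Mapping.keys w \<subseteq> {-L..L}" using keys_bounded by blast
      then have "Poly_Mapping.keys w \<subseteq> {-L..-L + int (nat (2 * L))}" by auto
      then show "w \<in> {p * g | p. True}" using red w by blast
    qed
  qed
  then show ?thesis using g g0 gn Hg dv by blast
qed

end


definition phi :: "nat \<Rightarrow> complex poly \<Rightarrow> laurent" where
  "phi m P = (\<Sum>k\<le>degree P. lsmult (coeff P k) (lt (int k * int m)))"

lemma lk_phi:
  assumes m: "m > 0"
  shows "lk (phi m P) j = (if 0 \<le> j \<and> int m dvd j then coeff P (nat (j div int m)) else 0)"
proof -
  have "lk (phi m P) j = (\<Sum>k\<le>degree P. if int k * int m = j then coeff P k else 0)"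
  proof -
    have "\<And>k. lk (lsmult (coeff P k) (lt (int k * int m))) j = (if int k * int m = j then coeff P k else 0)"
      by (simp add: lookup_lt)
    then show ?thesis unfolding phi_def by (simp only: lookup_sum)
  qed
  also have "\<dots> = (if 0 \<le> j \<and> int m dvd j then coeff P (nat (j div int m)) else 0)"
  proof (cases "0 \<le> j \<and> int m dvd j")
    case True
    then obtain q where q: "j = int m * q" by (auto simp: dvd_def)
    have q0: "q \<ge> 0" using True q m by (simp add: zero_le_mult_iff)
    have iff: "int k * int m = j \<longleftrightarrow> k = nat q" for k using q q0 m by auto
    have "(\<Sum>k\<le>degree P. if int k * int m = j then coeff P k else 0)
        = (\<Sum>k\<le>degree P. if k = nat q then coeff P k else 0)" by (simp only: iff)
    also have "\<dots> = coeff P (nat q)" by (simp add: sum.delta coeff_eq_0)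
    finally show ?thesis using True q m by simp
  next
    case False
    have nk: "int k * int m \<noteq> j" for k using False by auto
    have e: "(if 0 \<le> j \<and> int m dvd j then coeff P (nat (j div int m)) else 0) = 0"
      using False by (rule if_not_P)
    show ?thesis unfolding e using nk by simp
  qed
  finally show ?thesis .
qed

lemma phi_add: "m > 0 \<Longrightarrow> phi m (P + Q) = phi m P + phi m Q"
  by (rule poly_mapping_eqI) (simp add: lk_phi lookup_add)

lemma phi_smult: "m > 0 \<Longrightarrow> phi m (smult c Q) = lsmult c (phi m Q)"
  by (rule poly_mapping_eqI) (simp add: lk_phi)

lemma lsmult_0: "lsmult 0 p = 0"
  by (rule poly_mapping_eqI) simp

lemma phi_zero: "phi m 0 = 0"
  by (simp add: phi_def lsmult_0)

lemma phi_pCons: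
  assumes m: "m > 0"
  shows "phi m (pCons c P) = lsmult c 1 + lt (int m) * phi m P"
proof (rule poly_mapping_eqI)
  fix j
  show "lk (phi m (pCons c P)) j = lk (lsmult c 1 + lt (int m) * phi m P) j"
  proof (cases "0 \<le> j \<and> int m dvd j")
    case True
    then obtain q where q: "j = int m * q" by (auto simp: dvd_def)
    have q0: "q \<ge> 0" using True q m by (simp add: zero_le_mult_iff)
    show ?thesis
    proof (cases "q = 0")
      case True
      then show ?thesis using q m by (simp add: lk_phi lookup_add lookup_lt_mult lookup_one)
    next
      case False
      then have q1: "q \<ge> 1" using q0 by simp
      have jm: "j - int m = int m * (q - 1)" using q by (simp add: algebra_simps)
      have "nat q = Suc (nat (q - 1))" using q1 by simp
      then show ?thesis using q q1 m jm
        by (simp add: lk_phi lookup_add lookup_lt_mult lookup_one when_def)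
    qed
  next
    case False
    have j0: "j \<noteq> 0" using False by auto
    have "\<not> (0 \<le> j - int m \<and> int m dvd (j - int m))"
    proof
      assume h: "0 \<le> j - int m \<and> int m dvd (j - int m)"
      then have "int m dvd (j - int m) + int m" by (intro dvd_add) auto
      then have "int m dvd j" by simp
      then show False using False h by simp
    qed
    then show ?thesis using False j0 m by (auto simp add: lk_phi lookup_add lookup_lt_mult lookup_one)
  qed
qed

lemma phi_mult:
  assumes m: "m > 0"
  shows "phi m (P * Q) = phi m P * phi m Q"
proof (induction P rule: pCons_induct)
  case 0 then show ?case by (simp add: phi_zero)
next
  case (pCons c P)
  have "phi m (pCons c P * Q) = phi m (smult c Q + pCons 0 (P * Q))" by simp
  also have "\<dots> = lsmult c (phi m Q) + lt (int m) * (phi m P * phi m Q)"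
    using m by (simp add: phi_add phi_smult phi_pCons lsmult_conv pCons.IH)
  also have "\<dots> = phi m (pCons c P) * phi m Q"
    using m by (simp add: phi_pCons lsmult_conv algebra_simps)
  finally show ?case .
qed

context wm begin

lemma part3:
  assumes S: "lam \<in> S f" and na: "\<forall>j. a j \<noteq> 0" and nb: "\<forall>j. b j \<noteq> 0" and pn: "period lam \<noteq> 0"
    and W: "Hf_submodule X Y H W" and nz: "W \<noteq> {0}"
  shows "\<exists>g. g \<noteq> 0 \<and> in_C_tm (period lam) g \<and> h_eigenvector H g \<and> W = {p * g | p. True}"
proof -
  obtain g n0 where g: "g \<in> W" "g \<noteq> 0" "Poly_Mapping.keys g \<subseteq> {0..int n0}"
     "H g = lsmult (lam 0) g" "\<forall>j\<in>Poly_Mapping.keys g. int (period lam) dvd j" "W = {p * g | p. True}"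
    using gen_exists[OF S na nb pn W nz] by blast
  have "in_C_tm (period lam) g" unfolding in_C_tm_def using g(3,5) by auto
  moreover have "h_eigenvector H g" unfolding h_eigenvector_def using g(2,4) by blast
  ultimately show ?thesis using g(2,6) by blast
qed

lemma maximal:
  assumes S: "lam \<in> S f" and na: "\<forall>j. a j \<noteq> 0" and nb: "\<forall>j. b j \<noteq> 0" and pn: "period lam \<noteq> 0"
    and M: "maximal_proper_nonzero_submodule X Y H W"
  shows "\<exists>r. r \<noteq> 0 \<and> W = {p * (lt (int (period lam)) - lsmult r (lt 0)) | p. True}"
proof -
  have W: "Hf_submodule X Y H W" and nz: "W \<noteq> {0}" and nU: "W \<noteq> UNIV"
    using M unfolding maximal_proper_nonzero_submodule_def by auto
  obtain g n0 where g: "g \<in> W" "g \<noteq> 0" "Poly_Mapping.keys g \<subseteq> {0..int n0}" "lk g 0 \<noteq> 0" "lk g (int n0) \<noteq> 0"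
     "\<forall>j\<in>Poly_Mapping.keys g. int (period lam) dvd j" "W = {p * g | p. True}"
    using gen_exists[OF S na nb pn W nz] by blast
  define m where "m = period lam"
  have m0: "m > 0" using pn m_def by simp
  have n0: "n0 > 0"
  proof (rule ccontr)
    assume "\<not> n0 > 0"
    then have kg: "Poly_Mapping.keys g \<subseteq> {0}" using g(3) by auto
    define c where "c = lk g 0"
    have gc: "g = lsmult c 1"
    proof (rule poly_mapping_eqI)
      fix j show "lk g j = lk (lsmult c 1) j"
        using kg by (cases "j = 0") (auto simp: c_def lookup_one in_keys_iff)
    qed
    have "p \<in> W" for p
    proof -
      have cn: "c \<noteq> 0" using g(4) c_def by simp
      have "lsmult (1 / c) p * lsmult c 1 = p" using cn by (simp add: lsmult_conv mult_single ac_simps)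
      then have "p = lsmult (1 / c) p * g" by (simp only: gc)
      then show ?thesis using g(7) by blast
    qed
    then show False using nU by blast
  qed
  have "int n0 \<in> Poly_Mapping.keys g" using g(5) by (simp add: in_keys_iff)
  then have mdn: "int m dvd int n0" using g(6) unfolding m_def by blast
  define G where "G = (\<Sum>k\<le>n0. monom (lk g (int k * int m)) k)"
  have cG: "coeff G k = lk g (int k * int m)" for k
  proof (cases "k \<le> n0")
    case True then show ?thesis by (simp add: G_def coeff_sum coeff_monom sum.delta)
  next
    case False
    have "int k * 1 \<le> int k * int m" using m0 by (intro mult_left_mono) auto
    then have kk: "int k * int m > int n0" using False by linarith
    have "int k * int m \<notin> {0..int n0}" using kk by simp
    then have "int k * int m \<notin> Poly_Mapping.keys g" using g(3) by blast
    then show ?thesis using False by (simp add: G_def coeff_sum coeff_monom in_keys_iff)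
  qed
  have phiG: "phi m G = g"
  proof (rule poly_mapping_eqI)
    fix j
    show "lk (phi m G) j = lk g j"
    proof (cases "0 \<le> j \<and> int m dvd j")
      case True
      then obtain q where qj: "j = int m * q" by (auto simp: dvd_def)
      then have "q \<ge> 0" using True m0 by (simp add: zero_le_mult_iff)
      then show ?thesis using qj True m0 by (simp add: lk_phi cG mult.commute)
    next
      case False
      then have "j \<notin> Poly_Mapping.keys g" using g(3,6) m_def by auto
      then show ?thesis using False m0 by (auto simp add: lk_phi in_keys_iff)
    qed
  qed
  obtain q where q: "int n0 = int m * q" using mdn by (auto simp: dvd_def)
  have "int m * q > 0" using q n0 by simp
  then have "q > 0" using m0 by (simp add: zero_less_mult_iff)
  then have q1: "q \<ge> 1" by simp
  have nc: "\<not> (\<exists>c l. c \<noteq> 0 \<and> l = 0 \<and> G = pCons c l)"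
  proof
    assume "\<exists>c l. c \<noteq> 0 \<and> l = 0 \<and> G = pCons c l"
    then obtain c where Gc: "G = pCons c 0" by blast
    have "coeff G (nat q) = lk g (int n0)" using cG[of "nat q"] q q1 by (simp add: mult.commute)
    moreover have "coeff G (nat q) = 0" using Gc q1 by (simp add: coeff_pCons split: nat.split)
    ultimately show False using g(5) by simp
  qed
  obtain r where r: "poly G r = 0" using fundamental_theorem_of_algebra_alt[OF nc] by blast
  have r0: "r \<noteq> 0"
  proof
    assume "r = 0"
    then have "coeff G 0 = 0" using r by (simp add: poly_0_coeff_0)
    then show False using cG[of 0] g(4) by simp
  qed
  obtain Q where GQ: "G = [:-r, 1:] * Q" using r by (auto simp: poly_eq_0_iff_dvd dvd_def)
  define u where "u = lt (int m) - lsmult r (lt 0)"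
  have phiu: "phi m [:-r, 1:] = u"
    unfolding u_def using m0
    by (rule_tac poly_mapping_eqI) (simp add: phi_pCons phi_zero lookup_add lookup_minus lookup_one lt0_one lookup_lt_mult lookup_lt when_def)
  have "g = phi m ([:-r, 1:] * Q)" using phiG GQ by simp
  also have "\<dots> = phi m [:-r, 1:] * phi m Q" by (rule phi_mult[OF m0])
  finally have gu: "g = u * phi m Q" using phiu by simp
  define W' where "W' = {p * u | p. True}"
  have W'sub: "Hf_submodule X Y H W'" unfolding W'_def u_def m_def by (rule ideal_sub)
  have W'nU: "W' \<noteq> UNIV"
  proof
    assume "W' = UNIV"
    moreover have "(1::laurent) \<notin> W'" unfolding W'_def u_def using one_notin_ideal[OF r0, of "int m"] m0 by simp
    ultimately show False by blast
  qed
  have "W \<subseteq> W'"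
  proof
    fix w assume "w \<in> W"
    then obtain p where "w = p * g" using g(7) by blast
    then have "w = (p * phi m Q) * u" using gu by (simp add: ac_simps)
    then show "w \<in> W'" unfolding W'_def by blast
  qed
  then have "W' = W" using M W'sub W'nU unfolding maximal_proper_nonzero_submodule_def by blast
  then show ?thesis using r0 unfolding W'_def u_def m_def by blast
qed

end


theorem lemma7:
  fixes f :: "complex poly" and lam :: "int \<Rightarrow> complex" and z :: complex
  assumes "lam \<in> S f"
  shows "(Hf_module f (A_x lam z) (A_y lam z) (A_h lam) \<and> Hf_module f (B_x lam z) (B_y lam z) (B_h lam))
    \<and> (simple_Hf_module f (A_x lam z) (A_y lam z) (A_h lam) \<longleftrightarrow>
           (\<forall>i. lam i + z \<noteq> 0) \<and> period lam = 0)
    \<and> (simple_Hf_module f (B_x lam z) (B_y lam z) (B_h lam) \<longleftrightarrow>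
           (\<forall>i. lam i + z \<noteq> 0) \<and> period lam = 0)
    \<and> ((\<forall>i. lam i + z \<noteq> 0) \<and> period lam \<noteq> 0 \<longrightarrow>
        (\<forall>W. Hf_submodule (A_x lam z) (A_y lam z) (A_h lam) W \<and> W \<noteq> {0} \<longrightarrow>
             (\<exists>g. g \<noteq> 0 \<and> in_C_tm (period lam) g \<and> h_eigenvector (A_h lam) g \<and>
                  W = {p * g | p. True}))
      \<and> (\<forall>W. Hf_submodule (B_x lam z) (B_y lam z) (B_h lam) W \<and> W \<noteq> {0} \<longrightarrow>
             (\<exists>g. g \<noteq> 0 \<and> in_C_tm (period lam) g \<and> h_eigenvector (B_h lam) g \<and>
                  W = {p * g | p. True}))
      \<and> (\<forall>W. maximal_proper_nonzero_submodule (A_x lam z) (A_y lam z) (A_h lam) W \<longrightarrow>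
             (\<exists>a. a \<noteq> 0 \<and> W = {p * (lt (int (period lam)) - lsmult a (lt 0)) | p. True})))"
proof (intro conjI impI allI)
  show "Hf_module f (A_x lam z) (A_y lam z) (A_h lam)" by (rule A.module[OF assms])
  show "Hf_module f (B_x lam z) (B_y lam z) (B_h lam)" by (rule B.module[OF assms])
  show "simple_Hf_module f (A_x lam z) (A_y lam z) (A_h lam) \<longleftrightarrow> (\<forall>i. lam i + z \<noteq> 0) \<and> period lam = 0"
    using A.simple_iff[OF assms] by simp
  show "simple_Hf_module f (B_x lam z) (B_y lam z) (B_h lam) \<longleftrightarrow> (\<forall>i. lam i + z \<noteq> 0) \<and> period lam = 0"
    using B.simple_iff[OF assms] by simp
next
  assume h: "(\<forall>i. lam i + z \<noteq> 0) \<and> period lam \<noteq> 0"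
  {
    fix W assume W: "Hf_submodule (A_x lam z) (A_y lam z) (A_h lam) W \<and> W \<noteq> {0}"
    show "\<exists>g. g \<noteq> 0 \<and> in_C_tm (period lam) g \<and> h_eigenvector (A_h lam) g \<and> W = {p * g | p. True}"
      using A.part3[OF assms _ _ _ conjunct1[OF W] conjunct2[OF W]] h by simp
  next
    fix W assume W: "Hf_submodule (B_x lam z) (B_y lam z) (B_h lam) W \<and> W \<noteq> {0}"
    show "\<exists>g. g \<noteq> 0 \<and> in_C_tm (period lam) g \<and> h_eigenvector (B_h lam) g \<and> W = {p * g | p. True}"
      using B.part3[OF assms _ _ _ conjunct1[OF W] conjunct2[OF W]] h by simp
  next
    fix W assume W: "maximal_proper_nonzero_submodule (A_x lam z) (A_y lam z) (A_h lam) W"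
    show "\<exists>a. a \<noteq> 0 \<and> W = {p * (lt (int (period lam)) - lsmult a (lt 0)) | p. True}"
      using A.maximal[OF assms _ _ _ W] h by simp
  }
qed

end
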